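(* Let $k\geq 1$ and let $a,b,\alpha,\beta$ be positive real numbers with $a\geq b$. Define \[ \theta(t)=\frac{(\alpha+\beta t)^{a-b}\, e^{t\left(\frac{ka\beta\gamma-b\beta\gamma}{k}\right)}\,\Gamma(\alpha+\beta t)^a}{k^{-\frac{b\beta t}{k}}\,\Gamma_k(\alpha+\beta t)^b},\qquad t\in(0,\infty). \] Then $\theta$ is increasing on $(0,\infty)$, and for every $t\in(0,1)$, \[ \frac{\alpha^{a-b}e^{-t\left(\frac{ka\beta\gamma-b\beta\gamma}{k}\right)}\,\Gamma(\alpha)^a}{(\alpha+\beta t)^{a-b}\,k^{\frac{b\beta t}{k}}\,\Gamma_k(\alpha)^b} \leq\frac{\Gamma(\alpha+\beta t)^a}{\Gamma_k(\alpha+\beta t)^b} \leq\frac{(\alpha+\beta)^{a-b}e^{(1-t)\left(\frac{ka\beta\gamma-b\beta\gamma}{k}\right)}\,\Gamma(\alpha+\beta)^a}{(\alpha+\beta t)^{a-b}\,k^{\frac{b\beta}{k}(t-1)}\,\Gamma_k(\alpha+\beta)^b}. \]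
   Context: $\Gamma$ is Euler's Gamma function and $\gamma$ is the Euler–Mascheroni constant. For $k>0$ and $t>0$, the $k$-Gamma function is $\Gamma_k(t)=\int_0^\infty e^{-x^k/k}x^{t-1}\,dx$. *)

theory Defs
  imports "HOL-Analysis.Analysis"
begin

definition k_Gamma :: "real \<Rightarrow> real \<Rightarrow> real" where
  "k_Gamma k t = integral {0<..} (\<lambda>x::real. exp (- (x powr k) / k) * x powr (t - 1))"

end

theory Submission
  imports Defs
begin

lemma Gamma_integral_real':
  assumes "x > (0::real)"
  shows "((\<lambda>t. t powr (x - 1) / exp t) has_integral Gamma x) {0<..}"
proof -
  have "((\<lambda>t. t powr (x - 1) / exp t) has_integral Gamma x) {0..}"
    by (rule Gamma_integral_real) fact
  hence "((\<lambda>t. if t \<in> {0<..} then t powr (x - 1) / exp t else 0) has_integral Gamma x) {0..}"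
    by (rule has_integral_spike [of "{0}", rotated 2]) auto
  also have "?this = ?thesis"
    by (subst has_integral_restrict) auto
  finally show ?thesis .
qed

lemma k_Gamma_eq:
  fixes k s :: real
  assumes k: "k > 0" and s: "s > 0"
  shows "k_Gamma k s = k powr (s / k - 1) * Gamma (s / k)"
proof -
  define g where "g = (\<lambda>x::real. x powr k / k)"
  define g' where "g' = (\<lambda>x::real. x powr (k - 1))"
  define f where "f = (\<lambda>t::real. t powr (s / k - 1) / exp t)"
  have sk: "s / k > 0" using k s by simp
  have gS: "g ` {0<..} = {0<..}"
  proof
    show "g ` {0<..} \<subseteq> {0<..}" using k by (auto simp: g_def)
    show "{0<..} \<subseteq> g ` {0<..}"
    proof
      fix u :: real assume u: "u \<in> {0<..}"
      have "g ((k * u) powr (1 / k)) = u"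
        using k u by (simp add: g_def powr_powr)
      moreover have "(k * u) powr (1 / k) \<in> {0<..}" using k u by simp
      ultimately show "u \<in> g ` {0<..}" by (metis image_eqI)
    qed
  qed
  have der: "(g has_field_derivative g' x) (at x within {0<..})" if "x \<in> {0<..}" for x
    using that k unfolding g_def g'_def
    by (auto intro!: derivative_eq_intros simp: field_simps)
  have inj: "inj_on g {0<..}"
  proof (rule inj_onI)
    fix x y :: real assume "x \<in> {0<..}" "y \<in> {0<..}" "g x = g y"
    hence "x powr k = y powr k" using k by (simp add: g_def)
    hence "(x powr k) powr (1/k) = (y powr k) powr (1/k)" by simp
    thus "x = y" using k \<open>x \<in> {0<..}\<close> \<open>y \<in> {0<..}\<close> by (simp add: powr_powr)
  qed
  have fint: "(f has_integral Gamma (s / k)) {0<..}"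
    unfolding f_def by (rule Gamma_integral_real'[OF sk])
  have fabs: "f absolutely_integrable_on {0<..}"
    by (rule nonnegative_absolutely_integrable_1) (use fint in \<open>auto simp: f_def\<close>)
  have "f absolutely_integrable_on (g ` {0<..}) \<and> integral (g ` {0<..}) f = Gamma (s / k)"
    using gS fabs fint by (simp add: integral_unique)
  hence "(\<lambda>x. \<bar>g' x\<bar> * f (g x)) absolutely_integrable_on {0<..} \<and>
           integral {0<..} (\<lambda>x. \<bar>g' x\<bar> * f (g x)) = Gamma (s / k)"
    using has_absolute_integral_change_of_variables_1'[OF _ der inj, of f "Gamma (s/k)"] by simp
  hence I: "integral {0<..} (\<lambda>x. \<bar>g' x\<bar> * f (g x)) = Gamma (s / k)" by blast
  have eq: "\<bar>g' x\<bar> * f (g x) = k powr (1 - s / k) * (exp (- (x powr k) / k) * x powr (s - 1))"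
    if "x \<in> {0<..}" for x
  proof -
    have x: "x > 0" using that by simp
    have "(x powr k / k) powr (s / k - 1) = x powr (k * (s / k - 1)) / k powr (s / k - 1)"
      using x k by (simp add: powr_divide powr_powr)
    also have "k * (s / k - 1) = s - k" using k by (simp add: field_simps)
    finally have A: "(x powr k / k) powr (s / k - 1) = x powr (s - k) / k powr (s / k - 1)" .
    have B: "x powr (k - 1) * x powr (s - k) = x powr (s - 1)"
      using x by (simp add: powr_add[symmetric])
    have C: "1 / k powr (s / k - 1) = k powr (1 - s / k)"
      using k by (simp add: powr_minus_divide[symmetric] powr_minus)
    have "\<bar>g' x\<bar> * f (g x) = (x powr (k - 1) * x powr (s - k)) * (1 / k powr (s / k - 1)) / exp (x powr k / k)"
      using x by (simp add: g_def g'_def f_def A)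
    also have "\<dots> = k powr (1 - s / k) * (exp (- (x powr k) / k) * x powr (s - 1))"
      by (simp add: B C exp_minus field_simps)
    finally show ?thesis .
  qed
  have "integral {0<..} (\<lambda>x. \<bar>g' x\<bar> * f (g x)) =
        integral {0<..} (\<lambda>x. k powr (1 - s / k) * (exp (- (x powr k) / k) * x powr (s - 1)))"
    by (rule integral_cong) (use eq in auto)
  also have "\<dots> = k powr (1 - s / k) * k_Gamma k s"
    unfolding k_Gamma_def by simp
  finally have "k powr (1 - s / k) * k_Gamma k s = Gamma (s / k)" using I by simp
  hence "k powr (s/k - 1) * (k powr (1 - s / k) * k_Gamma k s) = k powr (s/k - 1) * Gamma (s / k)" by simp
  moreover have "k powr (s/k - 1) * k powr (1 - s / k) = 1" using k by (simp add: powr_add[symmetric])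
  ultimately show ?thesis by (metis mult.assoc mult_1)
qed

lemma Digamma_mono_real:
  assumes "1 \<le> u" "u \<le> v"
  shows "Digamma u \<le> Digamma (v::real)"
proof (rule DERIV_nonneg_imp_nondecreasing[OF assms(2)])
  fix x :: real assume x: "u \<le> x" "x \<le> v"
  hence xn: "x \<notin> \<int>\<^sub>\<le>\<^sub>0" using assms nonpos_Ints_nonpos by fastforce
  show "\<exists>y. DERIV (Polygamma 0) x :> y \<and> y \<ge> 0"
    using has_field_derivative_Polygamma[OF xn, of 0 UNIV] Polygamma_real_odd_pos[OF xn, of 1]
    by (intro exI[of _ "Polygamma 1 x"]) auto
qed

lemma Digamma_ge_real:
  assumes "1 \<le> (u::real)"
  shows "Digamma u \<ge> - euler_mascheroni"
  using Digamma_mono_real[OF order_refl assms] by simp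

lemma key_ineq:
  fixes s k a b :: real
  assumes s: "s > 0" and k: "k \<ge> 1" and b: "b > 0" and ab: "b \<le> a"
  shows "0 \<le> (a - b) / s + a * Digamma s - (b / k) * Digamma (s / k) + euler_mascheroni * (a - b / k)"
proof -
  have k0: "k > 0" using k by simp
  have sk: "s / k > 0" using s k0 by simp
  have d1: "Digamma s = Digamma (s + 1) - 1 / s" using Digamma_plus1[of s] s by simp
  have d2: "Digamma (s / k) = Digamma (s / k + 1) - k / s" using Digamma_plus1[of "s/k"] sk s k0 by simp
  define A where "A = Digamma (s + 1) + euler_mascheroni"
  define B where "B = Digamma (s / k + 1) + euler_mascheroni"
  have B0: "B \<ge> 0" unfolding B_def using Digamma_ge_real[of "s/k+1"] sk by simp
  have "s / k \<le> s" using s k by (simp add: divide_le_eq)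
  hence BA: "B \<le> A" unfolding A_def B_def using Digamma_mono_real[of "s/k+1" "s+1"] sk by simp
  have bk: "b / k \<le> a" using k b ab by (smt (verit) divide_le_eq mult_le_cancel_left1)
  have "(b / k) * B \<le> a * A" using mult_mono[OF bk BA] B0 b ab by simp
  moreover have "(a - b) / s + a * Digamma s - (b / k) * Digamma (s / k) + euler_mascheroni * (a - b / k)
      = a * A - (b / k) * B"
    unfolding A_def B_def d1 d2 using s k0 by (simp add: field_simps)
  ultimately show ?thesis by simp
qed

lemma derivL: fixes \<alpha> \<beta> t k a b c :: real
  assumes "0 < \<alpha> + \<beta> * t" "k > 0"
  shows "((\<lambda>t. (a - b) * ln (\<alpha> + \<beta> * t) + t * c + a * ln_Gamma (\<alpha> + \<beta> * t)
      + (b * \<beta> * t / k) * ln k - b * (((\<alpha> + \<beta> * t) / k - 1) * ln k + ln_Gamma ((\<alpha> + \<beta> * t) / k))) has_field_derivative (a - b) * (\<beta> / (\<alpha> + \<beta> * t)) + c + a * (\<beta> * Digamma (\<alpha> + \<beta> * t)) + b * \<beta> / k * ln k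
        - b * (\<beta> / k * ln k + \<beta> / k * Digamma ((\<alpha> + \<beta> * t) / k))) (at t)"
proof -
  have sk: "0 < (\<alpha> + \<beta> * t) / k" using assms by simp
  show ?thesis
  using assms sk
  apply (auto intro!: derivative_eq_intros)
  apply (simp add: ac_simps)
  done
qed

lemma exp_combine: fixes A B C D tc :: real shows "exp A * exp tc * exp B / (exp C * exp D) = exp (A + tc + B - C - D)"
  by (simp add: exp_add exp_diff)
lemma alg1:
  fixes S E E' G Kp KG :: real
  assumes "S > 0" "Kp > 0" "KG > 0" "E * E' = 1"
  shows "(S * E * G) / ((1 / Kp) * KG) * (E' * (1 / Kp) / S) = G / KG"
  using assms by (simp add: field_simps)

lemma alg2:
  fixes A S E' G0 Kp KG0 :: real
  assumes "S > 0" "Kp > 0" "KG0 > 0"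
  shows "A * E' * G0 / (S * Kp * KG0) = (A * G0 / KG0) * (E' * (1 / Kp) / S)"
  using assms by (simp add: field_simps)

lemma alg3:
  fixes B S E E' EC G1 Kp Q KG1 :: real
  assumes "S > 0" "Kp > 0" "Q > 0" "KG1 > 0" "E > 0" "E' = 1 / E"
  shows "(B * EC * G1) / ((1 / Q) * KG1) * (E' * (1 / Kp) / S) = (B * (EC / E) * G1) / (S * (Kp / Q) * KG1)"
  using assms by (simp add: field_simps)

theorem theorem3p9:
  fixes k a b \<alpha> \<beta> :: real
  assumes "k \<ge> 1" and "a > 0" and "b > 0" and "\<alpha> > 0" and "\<beta> > 0" and "a \<ge> b"
  defines "c \<equiv> (k * a * \<beta> * euler_mascheroni - b * \<beta> * euler_mascheroni) / k"
  defines "\<theta> \<equiv> (\<lambda>t::real. ((\<alpha> + \<beta> * t) powr (a - b) * exp (t * c) * Gamma (\<alpha> + \<beta> * t) powr a)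
                   / (k powr (- (b * \<beta> * t / k)) * k_Gamma k (\<alpha> + \<beta> * t) powr b))"
  shows "mono_on {0<..} \<theta>
    \<and> (\<forall>t\<in>{0<..<1}.
        (\<alpha> powr (a - b) * exp (- t * c) * Gamma \<alpha> powr a)
          / ((\<alpha> + \<beta> * t) powr (a - b) * k powr (b * \<beta> * t / k) * k_Gamma k \<alpha> powr b)
        \<le> Gamma (\<alpha> + \<beta> * t) powr a / k_Gamma k (\<alpha> + \<beta> * t) powr b
      \<and> Gamma (\<alpha> + \<beta> * t) powr a / k_Gamma k (\<alpha> + \<beta> * t) powr b
        \<le> ((\<alpha> + \<beta>) powr (a - b) * exp ((1 - t) * c) * Gamma (\<alpha> + \<beta>) powr a)
          / ((\<alpha> + \<beta> * t) powr (a - b) * k powr (b * \<beta> / k * (t - 1)) * k_Gamma k (\<alpha> + \<beta>) powr b))"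
proof -
  note hk = assms(1) and ha = assms(2) and hb = assms(3) and hal = assms(4) and hbe = assms(5) and hab = assms(6)
  have k0: "k > 0" using hk by simp
  define L where "L = (\<lambda>t. (a - b) * ln (\<alpha> + \<beta> * t) + t * c + a * ln_Gamma (\<alpha> + \<beta> * t)
      + (b * \<beta> * t / k) * ln k - b * (((\<alpha> + \<beta> * t) / k - 1) * ln k + ln_Gamma ((\<alpha> + \<beta> * t) / k)))"
  have KGpos: "k_Gamma k s > 0" if "s > 0" for s
    using k_Gamma_eq[OF k0 that] that k0 by simp
  have thL: "\<theta> t = exp (L t)" if t: "t \<ge> 0" for t
  proof -
    define s where "s = \<alpha> + \<beta> * t"
    have s: "s > 0" unfolding s_def using t hal hbe by (simp add: add_pos_nonneg)
    have sk: "s / k > 0" using s k0 by simp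
    have e1: "s powr (a - b) = exp ((a - b) * ln s)" using s by (simp add: powr_def)
    have e2: "Gamma s powr a = exp (a * ln_Gamma s)"
      using s Gamma_real_pos[OF s] by (simp add: powr_def ln_Gamma_real_pos del: Gamma_real_pos)
    have e3: "k powr (- (b * \<beta> * t / k)) = exp (- (b * \<beta> * t / k) * ln k)" using k0 by (simp add: powr_def)
    have "k_Gamma k s powr b = exp (b * ln (k_Gamma k s))" using KGpos[OF s] by (simp add: powr_def)
    also have "ln (k_Gamma k s) = (s / k - 1) * ln k + ln_Gamma (s / k)"
      using k_Gamma_eq[OF k0 s] sk k0 Gamma_real_pos[OF sk] by (simp add: ln_mult ln_powr ln_Gamma_real_pos del: Gamma_real_pos)
    finally have e4: "k_Gamma k s powr b = exp (b * ((s / k - 1) * ln k + ln_Gamma (s / k)))" .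
    have "\<theta> t = exp ((a - b) * ln s) * exp (t * c) * exp (a * ln_Gamma s) /
       (exp (- (b * \<beta> * t / k) * ln k) * exp (b * ((s / k - 1) * ln k + ln_Gamma (s / k))))"
      unfolding \<theta>_def s_def[symmetric] e1 e2 e3 e4 by simp
    also have "\<dots> = exp (L t)"
      unfolding exp_combine L_def s_def by (simp add: algebra_simps)
    finally show ?thesis .
  qed
  have Lmono: "L x \<le> L y" if xy: "0 \<le> x" "x \<le> y" for x y
  proof (rule DERIV_nonneg_imp_nondecreasing[OF xy(2)])
    fix t assume t: "x \<le> t" "t \<le> y"
    define s where "s = \<alpha> + \<beta> * t"
    have s: "s > 0" unfolding s_def using t xy hal hbe by (simp add: add_pos_nonneg)
    have sk: "s / k > 0" using s k0 by simp
    have D: "DERIV L t :> (a - b) * (\<beta> / s) + c + a * (\<beta> * Digamma s) + b * \<beta> / k * ln k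
        - b * (\<beta> / k * ln k + \<beta> / k * Digamma (s / k))"
      unfolding L_def s_def using derivL[of \<alpha> \<beta> t k a b c] s k0 unfolding s_def by simp
    have eq: "(a - b) * (\<beta> / s) + c + a * (\<beta> * Digamma s) + b * \<beta> / k * ln k
        - b * (\<beta> / k * ln k + \<beta> / k * Digamma (s / k))
       = \<beta> * ((a - b) / s + a * Digamma s - (b / k) * Digamma (s / k) + euler_mascheroni * (a - b / k))"
      unfolding c_def using k0 by (simp add: field_simps)
    have "0 \<le> \<beta> * ((a - b) / s + a * Digamma s - (b / k) * Digamma (s / k) + euler_mascheroni * (a - b / k))"
      using key_ineq[OF s hk hb hab] hbe by simp
    thus "\<exists>y. DERIV L t :> y \<and> 0 \<le> y" using D eq by metis
  qed
  have thmono: "\<theta> x \<le> \<theta> y" if "0 \<le> x" "x \<le> y" for x y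
    using thL[of x] thL[of y] Lmono[OF that] that by simp
  have part1: "mono_on {0<..} \<theta>"
    by (rule mono_onI) (use thmono in auto)
  have part2: "\<forall>t\<in>{0<..<1}.
        (\<alpha> powr (a - b) * exp (- t * c) * Gamma \<alpha> powr a)
          / ((\<alpha> + \<beta> * t) powr (a - b) * k powr (b * \<beta> * t / k) * k_Gamma k \<alpha> powr b)
        \<le> Gamma (\<alpha> + \<beta> * t) powr a / k_Gamma k (\<alpha> + \<beta> * t) powr b
      \<and> Gamma (\<alpha> + \<beta> * t) powr a / k_Gamma k (\<alpha> + \<beta> * t) powr b
        \<le> ((\<alpha> + \<beta>) powr (a - b) * exp ((1 - t) * c) * Gamma (\<alpha> + \<beta>) powr a)
          / ((\<alpha> + \<beta> * t) powr (a - b) * k powr (b * \<beta> / k * (t - 1)) * k_Gamma k (\<alpha> + \<beta>) powr b)"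
  proof
    fix t :: real assume t: "t \<in> {0<..<1}"
    define s where "s = \<alpha> + \<beta> * t"
    have s: "s > 0" unfolding s_def using t hal hbe by (simp add: add_pos_pos)
    have ab1: "\<alpha> + \<beta> > 0" using hal hbe by simp
    define P where "P = exp (- t * c) * k powr (- (b * \<beta> * t / k)) / s powr (a - b)"
    have P: "P > 0" unfolding P_def using s k0 by simp
    have th0: "\<theta> 0 \<le> \<theta> t" and th1: "\<theta> t \<le> \<theta> 1" using thmono t by auto
    have pm: "k powr (- x) = 1 / k powr x" for x using k0 by (simp add: powr_minus divide_inverse)
    have K1: "k_Gamma k \<alpha> > 0" "k_Gamma k s > 0" "k_Gamma k (\<alpha> + \<beta>) > 0"
      using KGpos hal s ab1 by auto
    have kp: "k powr x > 0" for x using k0 by simp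
    have tP: "\<theta> t * P = Gamma s powr a / k_Gamma k s powr b"
      unfolding \<theta>_def P_def s_def[symmetric] using K1 s kp
      by (simp add: pm field_simps exp_minus)
    have "(\<alpha> powr (a - b) * exp (- t * c) * Gamma \<alpha> powr a)
          / (s powr (a - b) * k powr (b * \<beta> * t / k) * k_Gamma k \<alpha> powr b) = \<theta> 0 * P"
      unfolding \<theta>_def P_def using K1 s kp by (simp add: pm field_simps)
    also have "\<dots> \<le> \<theta> t * P" using th0 P by simp
    also have "\<theta> t * P = Gamma s powr a / k_Gamma k s powr b" by (rule tP)
    finally have lo: "(\<alpha> powr (a - b) * exp (- t * c) * Gamma \<alpha> powr a)
          / (s powr (a - b) * k powr (b * \<beta> * t / k) * k_Gamma k \<alpha> powr b) \<le> Gamma s powr a / k_Gamma k s powr b" .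
    have ex: "exp ((1 - t) * c) = exp c / exp (t * c)" by (simp add: exp_diff[symmetric] algebra_simps)
    have kx: "k powr (b * \<beta> / k * (t - 1)) = k powr (b * \<beta> * t / k) / k powr (b * \<beta> / k)"
    proof -
      have "b * \<beta> / k * (t - 1) = b * \<beta> * t / k - b * \<beta> / k" using k0 by (simp add: field_simps)
      thus ?thesis using k0 by (simp add: powr_diff)
    qed
    have "Gamma s powr a / k_Gamma k s powr b = \<theta> t * P" using tP by simp
    also have "\<dots> \<le> \<theta> 1 * P" using th1 P by simp
    also have "\<theta> 1 * P = ((\<alpha> + \<beta>) powr (a - b) * exp ((1 - t) * c) * Gamma (\<alpha> + \<beta>) powr a)
          / (s powr (a - b) * k powr (b * \<beta> / k * (t - 1)) * k_Gamma k (\<alpha> + \<beta>) powr b)"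
      unfolding \<theta>_def P_def ex kx using K1 s kp by (simp add: pm field_simps exp_minus)
    finally have hi: "Gamma s powr a / k_Gamma k s powr b \<le> ((\<alpha> + \<beta>) powr (a - b) * exp ((1 - t) * c) * Gamma (\<alpha> + \<beta>) powr a)
          / (s powr (a - b) * k powr (b * \<beta> / k * (t - 1)) * k_Gamma k (\<alpha> + \<beta>) powr b)" .
    show "(\<alpha> powr (a - b) * exp (- t * c) * Gamma \<alpha> powr a)
          / ((\<alpha> + \<beta> * t) powr (a - b) * k powr (b * \<beta> * t / k) * k_Gamma k \<alpha> powr b)
        \<le> Gamma (\<alpha> + \<beta> * t) powr a / k_Gamma k (\<alpha> + \<beta> * t) powr b
      \<and> Gamma (\<alpha> + \<beta> * t) powr a / k_Gamma k (\<alpha> + \<beta> * t) powr b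
        \<le> ((\<alpha> + \<beta>) powr (a - b) * exp ((1 - t) * c) * Gamma (\<alpha> + \<beta>) powr a)
          / ((\<alpha> + \<beta> * t) powr (a - b) * k powr (b * \<beta> / k * (t - 1)) * k_Gamma k (\<alpha> + \<beta>) powr b)"
      using lo hi unfolding s_def by blast
  qed
  show ?thesis using part1 part2 by blast
qed

end
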